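(* Let $\mathcal A$ be a well-structured abstract domain with abstraction and concretisation functions $\alpha:\mathcal Q\to\mathcal A$ and $\gamma:\mathcal A\to\mathcal Q$. Then there exist monotone maps $\alpha':\mathcal S(\mathcal H_V)\to\mathcal A$ and $\gamma':\mathcal A\to\mathcal S(\mathcal H_V)$ forming a Galois embedding (with $\mathcal S(\mathcal H_V)$ ordered by inclusion) such that $\alpha=\alpha'\circ\alpha_s$ and $\gamma=\gamma_s\circ\gamma'$.
   Context: Fix a finite set $V$ of quantum variables, each a qubit with state space $\mathcal H_q\cong\mathbb C^2$; $\mathcal H_V=\bigotimes_{q\in V}\mathcal H_q$. $\mathcal D(\mathcal H_V)$ is the set of partial density operators on $\mathcal H_V$ (positive operators of trace at most $1$); $\lceil\rho\rceil$ denotes the support of $\rho$. The concrete domain is $\mathcal Q=2^{\mathcal D(\mathcal H_V)}$ ordered by inclusion. A pair of monotone maps $(\alpha,\gamma)$ between posets is a Galois connection if $c\le\gamma(a)\iff\alpha(c)\le a$, and a Galois embedding if moreover $\alpha\circ\gamma=\mathrm{id}$. A complete lattice $(\mathcal A,\le_{\mathcal A},\vee,\wedge,\bot,\top)$ with monotone $\alpha:\mathcal Q\to\mathcal A$, $\gamma:\mathcal A\to\mathcal Q$ is a well-structured abstract domain if (a) $(\alpha,\gamma)$ is a Galois embedding, and (b) for any family $\rho_i\in\mathcal D(\mathcal H_V)$ and reals $x_i>0$ with $\sum_i x_i\rho_i\in\mathcal D(\mathcal H_V)$, $\alpha(\sum_i x_i\rho_i)=\bigvee_i\alpha(\rho_i)$,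 where $\alpha(\rho)=\alpha(\{\rho\})$. The subspace domain $\mathcal S(\mathcal H_V)$ is the set of all subspaces of $\mathcal H_V$ ordered by inclusion, with join $P\vee Q=\mathrm{span}(P\cup Q)$ and meet $\cap$; its functions are $\gamma_s(P)=\{\rho\in\mathcal D(\mathcal H_V):\lceil\rho\rceil\subseteq P\}$ and $\alpha_s(R)=\bigvee\{\lceil\rho\rceil:\rho\in R\}$. *)

theory Defs
  imports Complex_Main
begin

text \<open>The Hilbert space H_V of the finite set V of qubits is modelled concretely in the
computational basis: basis states are the subsets s of V (s = set of qubits in state 1),
so H_V has dimension 2^|V|.\<close>

type_synonym 'q ket = "'q set \<Rightarrow> complex"
type_synonym 'q op = "'q set \<Rightarrow> 'q set \<Rightarrow> complex"

definition is_ket :: "'q set \<Rightarrow> 'q ket \<Rightarrow> bool" where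
  "is_ket V v \<longleftrightarrow> (\<forall>s. s \<notin> Pow V \<longrightarrow> v s = 0)"

definition is_op :: "'q set \<Rightarrow> 'q op \<Rightarrow> bool" where
  "is_op V A \<longleftrightarrow> (\<forall>s t. s \<notin> Pow V \<or> t \<notin> Pow V \<longrightarrow> A s t = 0)"

definition op_apply :: "'q set \<Rightarrow> 'q op \<Rightarrow> 'q ket \<Rightarrow> 'q ket" where
  "op_apply V A v = (\<lambda>s. \<Sum>t\<in>Pow V. A s t * v t)"

definition inner_H :: "'q set \<Rightarrow> 'q ket \<Rightarrow> 'q ket \<Rightarrow> complex" where
  "inner_H V u v = (\<Sum>s\<in>Pow V. cnj (u s) * v s)"

definition trace_H :: "'q set \<Rightarrow> 'q op \<Rightarrow> complex" where
  "trace_H V A = (\<Sum>s\<in>Pow V. A s s)"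

definition positive_op :: "'q set \<Rightarrow> 'q op \<Rightarrow> bool" where
  "positive_op V A \<longleftrightarrow> is_op V A \<and>
     (\<forall>v. is_ket V v \<longrightarrow> Im (inner_H V v (op_apply V A v)) = 0
                        \<and> Re (inner_H V v (op_apply V A v)) \<ge> 0)"

definition pdo :: "'q set \<Rightarrow> 'q op set" where
  "pdo V = {\<rho>. positive_op V \<rho> \<and> Re (trace_H V \<rho>) \<le> 1}"

text \<open>Support of an operator: its range (for positive operators this equals the
span of eigenvectors with nonzero eigenvalues).\<close>
definition supp :: "'q set \<Rightarrow> 'q op \<Rightarrow> 'q ket set" where
  "supp V A = {op_apply V A v | v. is_ket V v}"

definition subspace_H :: "'q set \<Rightarrow> 'q ket set \<Rightarrow> bool" where
  "subspace_H V S \<longleftrightarrow> S \<subseteq> {v. is_ket V v} \<and> (\<lambda>_. 0) \<in> S \<and>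
     (\<forall>u\<in>S. \<forall>v\<in>S. (\<lambda>s. u s + v s) \<in> S) \<and>
     (\<forall>c. \<forall>v\<in>S. (\<lambda>s. c * v s) \<in> S)"

definition subspaces :: "'q set \<Rightarrow> 'q ket set set" where
  "subspaces V = {S. subspace_H V S}"

definition span_H :: "'q set \<Rightarrow> 'q ket set \<Rightarrow> 'q ket set" where
  "span_H V X = \<Inter> {S. subspace_H V S \<and> X \<subseteq> S}"

definition alpha_s :: "'q set \<Rightarrow> 'q op set \<Rightarrow> 'q ket set" where
  "alpha_s V R = span_H V (\<Union>\<rho>\<in>R. supp V \<rho>)"

definition gamma_s :: "'q set \<Rightarrow> 'q ket set \<Rightarrow> 'q op set" where
  "gamma_s V P = {\<rho> \<in> pdo V. supp V \<rho> \<subseteq> P}"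

definition galois_embedding_on ::
  "'c::order set \<Rightarrow> ('c \<Rightarrow> 'a::order) \<Rightarrow> ('a \<Rightarrow> 'c) \<Rightarrow> bool" where
  "galois_embedding_on C \<alpha> \<gamma> \<longleftrightarrow>
     mono_on C \<alpha> \<and> mono \<gamma> \<and> (\<forall>a. \<gamma> a \<in> C) \<and>
     (\<forall>c\<in>C. \<forall>a. c \<le> \<gamma> a \<longleftrightarrow> \<alpha> c \<le> a) \<and>
     (\<forall>a. \<alpha> (\<gamma> a) = a)"

text \<open>Well-structured abstract domain over the concrete domain Q = 2^{D(H_V)}.
Condition (b) is stated for finite (possibly empty) families.\<close>
definition well_structured ::
  "'q set \<Rightarrow> ('q op set \<Rightarrow> 'a::complete_lattice) \<Rightarrow> ('a \<Rightarrow> 'q op set) \<Rightarrow> bool" where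
  "well_structured V \<alpha> \<gamma> \<longleftrightarrow>
     galois_embedding_on (Pow (pdo V)) \<alpha> \<gamma> \<and>
     (\<forall>(I::nat set) \<rho> x. finite I \<longrightarrow> (\<forall>i\<in>I. \<rho> i \<in> pdo V \<and> x i > (0::real)) \<longrightarrow>
        (\<lambda>s t. \<Sum>i\<in>I. complex_of_real (x i) * \<rho> i s t) \<in> pdo V \<longrightarrow>
        \<alpha> {(\<lambda>s t. \<Sum>i\<in>I. complex_of_real (x i) * \<rho> i s t)} = (SUP i\<in>I. \<alpha> {\<rho> i}))"

end

theory Submission
  imports Defs
begin

definition Bf :: "'q set \<Rightarrow> 'q op \<Rightarrow> 'q ket \<Rightarrow> 'q ket \<Rightarrow> complex" where
  "Bf V \<tau> v w = inner_H V v (op_apply V \<tau> w)"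

definition rk :: "'q ket \<Rightarrow> 'q op" where
  "rk u = (\<lambda>s t. u s * cnj (u t))"

lemma inner_add1: "inner_H V (\<lambda>s. u s + v s) w = inner_H V u w + inner_H V v w"
  by (simp add: inner_H_def sum.distrib distrib_right)
lemma inner_add2: "inner_H V u (\<lambda>s. v s + w s) = inner_H V u v + inner_H V u w"
  by (simp add: inner_H_def sum.distrib distrib_left)
lemma inner_scal1: "inner_H V (\<lambda>s. c * u s) w = cnj c * inner_H V u w"
  by (simp add: inner_H_def sum_distrib_left mult.assoc)
lemma inner_scal2: "inner_H V u (\<lambda>s. c * v s) = c * inner_H V u v"
  by (simp add: inner_H_def sum_distrib_left algebra_simps)
lemma inner_cnj: "inner_H V u v = cnj (inner_H V v u)"
  by (simp add: inner_H_def mult.commute)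
lemma op_add_v: "op_apply V A (\<lambda>s. v s + w s) = (\<lambda>s. op_apply V A v s + op_apply V A w s)"
  by (simp add: op_apply_def sum.distrib distrib_left)
lemma op_scal_v: "op_apply V A (\<lambda>s. c * v s) = (\<lambda>s. c * op_apply V A v s)"
  by (simp add: op_apply_def sum_distrib_left algebra_simps)
lemma op_add_A: "op_apply V (\<lambda>s t. A s t + B s t) v = (\<lambda>s. op_apply V A v s + op_apply V B v s)"
  by (simp add: op_apply_def sum.distrib distrib_right)
lemma op_scal_A: "op_apply V (\<lambda>s t. c * A s t) v = (\<lambda>s. c * op_apply V A v s)"
  by (simp add: op_apply_def sum_distrib_left algebra_simps)

lemma ket_add: "is_ket V u \<Longrightarrow> is_ket V v \<Longrightarrow> is_ket V (\<lambda>s. u s + v s)"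
  by (simp add: is_ket_def)
lemma ket_scal: "is_ket V u \<Longrightarrow> is_ket V (\<lambda>s. c * u s)"
  by (simp add: is_ket_def)
lemma op_ket: "is_op V A \<Longrightarrow> is_ket V (op_apply V A v)"
  by (simp add: is_ket_def is_op_def op_apply_def)

lemma Bf_expand:
  "Bf V \<tau> (\<lambda>s. v s + c * w s) (\<lambda>s. v s + c * w s) =
     Bf V \<tau> v v + c * Bf V \<tau> v w + cnj c * Bf V \<tau> w v + cnj c * c * Bf V \<tau> w w"
  by (simp add: Bf_def op_add_v op_scal_v inner_add1 inner_add2 inner_scal1 inner_scal2 algebra_simps)

lemma pos_real:
  assumes "positive_op V \<tau>" "is_ket V v"
  shows "Im (Bf V \<tau> v v) = 0" "Re (Bf V \<tau> v v) \<ge> 0"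
  using assms by (auto simp: positive_op_def Bf_def)

lemma herm:
  assumes p: "positive_op V \<tau>" and kv: "is_ket V v" and kw: "is_ket V w"
  shows "Bf V \<tau> w v = cnj (Bf V \<tau> v w)"
proof -
  have k1: "is_ket V (\<lambda>s. v s + 1 * w s)" using kv kw by (intro ket_add ket_scal)
  have k2: "is_ket V (\<lambda>s. v s + \<i> * w s)" using kv kw by (intro ket_add ket_scal)
  have a: "Im (Bf V \<tau> v v + 1 * Bf V \<tau> v w + cnj 1 * Bf V \<tau> w v + cnj 1 * 1 * Bf V \<tau> w w) = 0"
    using pos_real(1)[OF p k1] by (simp only: Bf_expand)
  have b: "Im (Bf V \<tau> v v + \<i> * Bf V \<tau> v w + cnj \<i> * Bf V \<tau> w v + cnj \<i> * \<i> * Bf V \<tau> w w) = 0"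
    using pos_real(1)[OF p k2] by (simp only: Bf_expand)
  have c: "Im (Bf V \<tau> v v) = 0" "Im (Bf V \<tau> w w) = 0" using pos_real(1) p kv kw by auto
  show ?thesis using a b c by (intro complex_eqI) auto
qed

lemma cs:
  assumes p: "positive_op V \<tau>" and kv: "is_ket V v" and kw: "is_ket V w"
  shows "(cmod (Bf V \<tau> w v))^2 \<le> Re (Bf V \<tau> w w) * Re (Bf V \<tau> v v)"
proof -
  define b where "b = Bf V \<tau> w v"
  define A where "A = Re (Bf V \<tau> w w)"
  define C where "C = Re (Bf V \<tau> v v)"
  define n where "n = (cmod b)^2"
  have A0: "A \<ge> 0" "C \<ge> 0" using pos_real p kv kw by (auto simp: A_def C_def)
  have AA: "Bf V \<tau> w w = of_real A" "Bf V \<tau> v v = of_real C"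
    using pos_real(1) p kv kw by (auto simp: A_def C_def complex_eq_iff)
  have hb: "Bf V \<tau> v w = cnj b" using herm[OF p kw kv] by (simp add: b_def)
  have bb: "cnj b * b = of_real n" by (simp add: n_def complex_norm_square mult.commute del: of_real_power)
  have quad: "0 \<le> A + 2 * r * n + r^2 * n * C" for r :: real
  proof -
    define t where "t = complex_of_real r * cnj b"
    have k: "is_ket V (\<lambda>s. w s + t * v s)" using kv kw by (intro ket_add ket_scal)
    have "Bf V \<tau> (\<lambda>s. w s + t * v s) (\<lambda>s. w s + t * v s) =
        of_real A + t * b + cnj t * cnj b + cnj t * t * of_real C"
      by (simp only: Bf_expand AA hb b_def)
    also have "\<dots> = of_real (A + 2 * r * n + r^2 * n * C)"
    proof -
      have "t * b = of_real (r * n)" unfolding t_def using bb by (simp add: mult.assoc)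
      moreover have "cnj t * cnj b = of_real (r * n)" unfolding t_def using bb
        by (simp add: mult.commute mult.left_commute)
      moreover have "cnj t * t = of_real (r^2 * n)" unfolding t_def using bb
        by (simp add: power2_eq_square mult.commute mult.left_commute)
      ultimately show ?thesis by (simp add: algebra_simps)
    qed
    finally show ?thesis using pos_real(2)[OF p k] by simp
  qed
  have n0: "n \<ge> 0" by (simp add: n_def)
  show ?thesis
  proof (cases "n = 0")
    case True then show ?thesis using A0 by (simp add: b_def[symmetric] n_def A_def[symmetric] C_def[symmetric])
  next
    case False
    hence np: "n > 0" using n0 by simp
    show ?thesis
    proof (cases "C = 0")
      case True
      have "0 \<le> A + 2 * (-(A+1)/(2*n)) * n + (-(A+1)/(2*n))^2 * n * C" by (rule quad)
      with True np show ?thesis by (simp add: field_simps)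
    next
      case False
      hence Cp: "C > 0" using A0 by simp
      have "0 \<le> A + 2 * (-1/C) * n + (-1/C)^2 * n * C" by (rule quad)
      hence "0 \<le> A - n / C" using Cp by (simp add: field_simps power2_eq_square)
      hence "n \<le> A * C" using Cp by (simp add: field_simps)
      thus ?thesis by (simp add: n_def b_def A_def C_def)
    qed
  qed
qed


definition ev :: "'q set \<Rightarrow> 'q ket" where "ev s = (\<lambda>t. if t = s then 1 else 0)"

lemma ket_ev: "s \<in> Pow V \<Longrightarrow> is_ket V (ev s)"
  by (auto simp: is_ket_def ev_def)

lemma op_ev: "finite V \<Longrightarrow> s \<in> Pow V \<Longrightarrow> op_apply V A (ev s) = (\<lambda>r. A r s)"
  by (simp add: op_apply_def ev_def if_distrib cong: if_cong)

lemma inner_ev: "finite V \<Longrightarrow> s \<in> Pow V \<Longrightarrow> inner_H V (ev s) x = x s"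
proof -
  assume "finite V" "s \<in> Pow V"
  have h: "(\<lambda>sa. cnj (ev s sa) * x sa) = (\<lambda>sa. if sa = s then x sa else 0)" by (auto simp: ev_def)
  show ?thesis using \<open>finite V\<close> \<open>s \<in> Pow V\<close> unfolding inner_H_def h by simp
qed

lemma Bf_ev: "finite V \<Longrightarrow> s \<in> Pow V \<Longrightarrow> t \<in> Pow V \<Longrightarrow> Bf V A (ev s) (ev t) = A s t"
  by (simp add: Bf_def op_ev inner_ev)

lemma diag_pos:
  assumes "finite V" "positive_op V A" "s \<in> Pow V"
  shows "Im (A s s) = 0" "Re (A s s) \<ge> 0"
  using pos_real[OF assms(2) ket_ev[OF assms(3)]] Bf_ev[OF assms(1) assms(3) assms(3)] by auto

lemma mat_cs:
  assumes "finite V" "positive_op V A" "s \<in> Pow V" "t \<in> Pow V"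
  shows "(cmod (A s t))^2 \<le> Re (A s s) * Re (A t t)"
  using cs[OF assms(2) ket_ev[OF assms(4)] ket_ev[OF assms(3)]] assms
  by (simp add: Bf_ev)

lemma trace_pos: "finite V \<Longrightarrow> positive_op V A \<Longrightarrow> Re (trace_H V A) \<ge> 0"
  unfolding trace_H_def Re_sum by (rule sum_nonneg) (rule diag_pos(2))

lemma pos_zero: "positive_op V (\<lambda>s t. 0)"
  by (simp add: positive_op_def is_op_def inner_H_def op_apply_def)

lemma Bf_add_A: "Bf V (\<lambda>s t. A s t + B s t) v w = Bf V A v w + Bf V B v w"
  by (simp add: Bf_def op_add_A inner_add2)
lemma Bf_scal_A: "Bf V (\<lambda>s t. c * A s t) v w = c * Bf V A v w"
  by (simp add: Bf_def op_scal_A inner_scal2)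

lemma pos_add: "positive_op V A \<Longrightarrow> positive_op V B \<Longrightarrow> positive_op V (\<lambda>s t. A s t + B s t)"
  unfolding positive_op_def by (auto simp: is_op_def Bf_add_A[unfolded Bf_def])

lemma pos_scal: "positive_op V A \<Longrightarrow> c \<ge> 0 \<Longrightarrow> positive_op V (\<lambda>s t. complex_of_real c * A s t)"
  unfolding positive_op_def by (auto simp: is_op_def Bf_scal_A[unfolded Bf_def])

lemma pdo_scal:
  assumes "finite V" "positive_op V A" "y \<ge> 0" "y * Re (trace_H V A) \<le> 1"
  shows "(\<lambda>s t. complex_of_real y * A s t) \<in> pdo V"
proof -
  have "trace_H V (\<lambda>s t. complex_of_real y * A s t) = complex_of_real y * trace_H V A"
    by (simp add: trace_H_def sum_distrib_left)
  thus ?thesis using assms by (simp add: pdo_def pos_scal)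
qed

lemma cnj_self: "cnj z * z = complex_of_real ((cmod z)^2)"
  by (simp add: complex_norm_square mult.commute del: of_real_power)

lemma inner_self_zero:
  assumes "finite V" "is_ket V u" "inner_H V u u = 0"
  shows "u = (\<lambda>_. 0)"
proof
  fix s
  have "(\<Sum>s\<in>Pow V. (cmod (u s))^2) = Re (inner_H V u u)"
    by (simp add: inner_H_def Re_sum cnj_self)
  hence "(\<Sum>s\<in>Pow V. (cmod (u s))^2) = 0" using assms by simp
  hence "\<forall>s\<in>Pow V. (cmod (u s))^2 = 0" using assms(1) by (subst (asm) sum_nonneg_eq_0_iff) auto
  thus "u s = 0" using assms(2) by (cases "s \<in> Pow V") (auto simp: is_ket_def)
qed


lemma rk_apply: "op_apply V (rk u) v = (\<lambda>s. inner_H V u v * u s)"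
  unfolding rk_def op_apply_def inner_H_def
  by (rule ext) (simp add: sum_distrib_right sum_distrib_left mult.commute mult.left_commute)

lemma Bf_rk: "Bf V (rk u) v v = complex_of_real ((cmod (inner_H V u v))^2)"
proof -
  have "Bf V (rk u) v v = inner_H V u v * inner_H V v u" by (simp add: Bf_def rk_apply inner_scal2)
  also have "\<dots> = cnj (inner_H V u v) * inner_H V u v" by (subst inner_cnj[of V v u]) (simp add: mult.commute)
  finally show ?thesis by (simp add: cnj_self)
qed

lemma rk_pos: "is_ket V u \<Longrightarrow> positive_op V (rk u)"
proof -
  assume k: "is_ket V u"
  have "is_op V (rk u)" using k by (auto simp: is_op_def is_ket_def rk_def)
  moreover have "Im (inner_H V v (op_apply V (rk u) v)) = 0 \<and> Re (inner_H V v (op_apply V (rk u) v)) \<ge> 0" for v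
    using Bf_rk[unfolded Bf_def, where u=u and v=v] by (simp del: of_real_power)
  ultimately show ?thesis unfolding positive_op_def by auto
qed

lemma rk_zero: "rk (\<lambda>_. 0) = (\<lambda>s t. 0)"
  by (simp add: rk_def)


lemma pos_intro:
  assumes "is_op V A" "\<And>v. is_ket V v \<Longrightarrow> \<exists>r\<ge>0. Bf V A v v = complex_of_real r"
  shows "positive_op V A"
  unfolding positive_op_def using assms by (fastforce simp: Bf_def)

lemma pos_op: "positive_op V A \<Longrightarrow> is_op V A"
  by (simp add: positive_op_def)

lemma inner_range:
  assumes p: "positive_op V \<tau>" and kw: "is_ket V w" and kv: "is_ket V v"
  shows "inner_H V (op_apply V \<tau> w) v = Bf V \<tau> w v"
proof -
  have "inner_H V (op_apply V \<tau> w) v = cnj (Bf V \<tau> v w)" by (subst inner_cnj) (simp add: Bf_def)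
  also have "\<dots> = Bf V \<tau> w v" using herm[OF p kv kw] by simp
  finally show ?thesis .
qed

lemma split_pos:
  assumes p: "positive_op V \<tau>" and kw: "is_ket V w" and A: "Re (Bf V \<tau> w w) > 0"
  shows "positive_op V (\<lambda>s t. \<tau> s t + complex_of_real (-1 / Re (Bf V \<tau> w w)) * rk (op_apply V \<tau> w) s t)"
proof (rule pos_intro)
  define A where "A = Re (Bf V \<tau> w w)"
  define u where "u = op_apply V \<tau> w"
  have ku: "is_ket V u" unfolding u_def using p by (intro op_ket pos_op)
  show "is_op V (\<lambda>s t. \<tau> s t + complex_of_real (-1 / Re (Bf V \<tau> w w)) * rk (op_apply V \<tau> w) s t)"
    using pos_op[OF p] pos_op[OF rk_pos[OF ku]] by (simp add: is_op_def u_def)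
  fix v assume kv: "is_ket V v"
  define C where "C = Re (Bf V \<tau> v v)"
  have Cv: "Bf V \<tau> v v = complex_of_real C" using pos_real(1)[OF p kv] by (simp add: C_def complex_eq_iff)
  have c: "(cmod (Bf V \<tau> w v))^2 \<le> A * C" using cs[OF p kv kw] by (simp add: A_def C_def)
  have "Bf V (\<lambda>s t. \<tau> s t + complex_of_real (-1 / A) * rk u s t) v v
      = Bf V \<tau> v v + complex_of_real (-1 / A) * Bf V (rk u) v v" by (simp only: Bf_add_A Bf_scal_A)
  also have "\<dots> = complex_of_real C + complex_of_real (-1 / A) * complex_of_real ((cmod (Bf V \<tau> w v))^2)"
    using inner_range[OF p kw kv] by (simp only: Bf_rk Cv u_def)
  also have "\<dots> = complex_of_real (C - (cmod (Bf V \<tau> w v))^2 / A)"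
    by (simp del: of_real_power)
  finally have "Bf V (\<lambda>s t. \<tau> s t + complex_of_real (-1 / A) * rk u s t) v v
      = complex_of_real (C - (cmod (Bf V \<tau> w v))^2 / A)" .
  moreover have "C - (cmod (Bf V \<tau> w v))^2 / A \<ge> 0" using c A by (simp add: A_def field_simps)
  ultimately show "\<exists>r\<ge>0. Bf V (\<lambda>s t. \<tau> s t + complex_of_real (-1 / Re (Bf V \<tau> w w)) * rk (op_apply V \<tau> w) s t) v v = complex_of_real r"
    unfolding A_def u_def by blast
qed

locale cls =
  fixes V :: "'q set" and S :: "'q op set"
  assumes fin: "finite V"
  and Spdo: "S \<subseteq> pdo V"
  and zero: "(\<lambda>s t. 0) \<in> S"
  and cl1: "\<And>(I::nat set) \<rho> x. finite I \<Longrightarrow> (\<forall>i\<in>I. \<rho> i \<in> S \<and> x i > (0::real)) \<Longrightarrow>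
        (\<lambda>s t. \<Sum>i\<in>I. complex_of_real (x i) * \<rho> i s t) \<in> pdo V \<Longrightarrow>
        (\<lambda>s t. \<Sum>i\<in>I. complex_of_real (x i) * \<rho> i s t) \<in> S"
  and cl2: "\<And>(I::nat set) \<rho> x j. finite I \<Longrightarrow> (\<forall>i\<in>I. \<rho> i \<in> pdo V \<and> x i > (0::real)) \<Longrightarrow>
        (\<lambda>s t. \<Sum>i\<in>I. complex_of_real (x i) * \<rho> i s t) \<in> S \<Longrightarrow> j \<in> I \<Longrightarrow> \<rho> j \<in> S"
begin

lemma two_sum:
  "(\<lambda>s t. \<Sum>i\<in>{0::nat,1}. complex_of_real ((\<lambda>i. if i = 0 then x1 else x2) i) *
       (\<lambda>i. if i = 0 then \<tau>1 else \<tau>2) i s t) = (\<lambda>s t. complex_of_real x1 * \<tau>1 s t + complex_of_real x2 * \<tau>2 s t)"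
  by simp

lemma cl1':
  assumes "\<tau>1 \<in> S" "\<tau>2 \<in> S" "x1 > 0" "x2 > 0"
    "(\<lambda>s t. complex_of_real x1 * \<tau>1 s t + complex_of_real x2 * \<tau>2 s t) \<in> pdo V"
  shows "(\<lambda>s t. complex_of_real x1 * \<tau>1 s t + complex_of_real x2 * \<tau>2 s t) \<in> S"
  using cl1[of "{0,1}" "\<lambda>i. if i = 0 then \<tau>1 else \<tau>2" "\<lambda>i. if i = 0 then x1 else x2"] assms
  unfolding two_sum by auto

lemma cl2':
  assumes "\<tau>1 \<in> pdo V" "\<tau>2 \<in> pdo V" "x1 > 0" "x2 > 0"
    "(\<lambda>s t. complex_of_real x1 * \<tau>1 s t + complex_of_real x2 * \<tau>2 s t) \<in> S"
  shows "\<tau>1 \<in> S"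
  using cl2[of "{0,1}" "\<lambda>i. if i = 0 then \<tau>1 else \<tau>2" "\<lambda>i. if i = 0 then x1 else x2" 0] assms
  unfolding two_sum by auto

lemma cl2s:
  assumes "\<tau> \<in> pdo V" "x > 0" "(\<lambda>s t. complex_of_real x * \<tau> s t) \<in> S"
  shows "\<tau> \<in> S"
  using cl2[of "{0}" "\<lambda>i. \<tau>" "\<lambda>i. x" 0] assms by auto

definition G :: "'q op \<Rightarrow> bool" where
  "G \<tau> \<longleftrightarrow> positive_op V \<tau> \<and> (\<exists>x>0. (\<lambda>s t. complex_of_real x * \<tau> s t) \<in> S)"

lemma G0: "G (\<lambda>s t. 0)"
  unfolding G_def using zero pos_zero by (auto intro!: exI[of _ 1])

lemma GS: "\<tau> \<in> S \<Longrightarrow> G \<tau>"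
  unfolding G_def using Spdo by (auto simp: pdo_def intro!: exI[of _ 1])

lemma SG: "G \<rho> \<Longrightarrow> \<rho> \<in> pdo V \<Longrightarrow> \<rho> \<in> S"
  unfolding G_def using cl2s by blast

lemma Gscale:
  assumes "G \<tau>" "c > 0" shows "G (\<lambda>s t. complex_of_real c * \<tau> s t)"
proof -
  obtain x where x: "x > 0" "(\<lambda>s t. complex_of_real x * \<tau> s t) \<in> S" using assms unfolding G_def by auto
  have "(\<lambda>s t. complex_of_real (x / c) * (complex_of_real c * \<tau> s t)) = (\<lambda>s t. complex_of_real x * \<tau> s t)"
    using assms(2) by (simp add: field_simps)
  thus ?thesis using x assms unfolding G_def
    by (auto intro!: pos_scal exI[of _ "x/c"])
qed

lemma scale_pdo:
  assumes "positive_op V A" obtains y where "y > 0" "(\<lambda>s t. complex_of_real y * A s t) \<in> pdo V"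
proof -
  have t: "Re (trace_H V A) \<ge> 0" using trace_pos[OF fin assms] .
  define y where "y = 1 / (1 + Re (trace_H V A))"
  have "y > 0" using t by (simp add: y_def)
  moreover have "y * Re (trace_H V A) \<le> 1" using t by (simp add: y_def field_simps)
  ultimately show ?thesis using that pdo_scal[OF fin assms] by auto
qed

lemma Gadd:
  assumes "G \<tau>1" "G \<tau>2" shows "G (\<lambda>s t. \<tau>1 s t + \<tau>2 s t)"
proof -
  obtain x1 where x1: "x1 > 0" "(\<lambda>s t. complex_of_real x1 * \<tau>1 s t) \<in> S" using assms unfolding G_def by auto
  obtain x2 where x2: "x2 > 0" "(\<lambda>s t. complex_of_real x2 * \<tau>2 s t) \<in> S" using assms unfolding G_def by auto
  have p: "positive_op V (\<lambda>s t. \<tau>1 s t + \<tau>2 s t)" using assms unfolding G_def by (auto intro: pos_add)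
  then obtain y where y: "y > 0" "(\<lambda>s t. complex_of_real y * (\<tau>1 s t + \<tau>2 s t)) \<in> pdo V" by (rule scale_pdo)
  have e: "(\<lambda>s t. complex_of_real (y/x1) * (complex_of_real x1 * \<tau>1 s t) + complex_of_real (y/x2) * (complex_of_real x2 * \<tau>2 s t))
      = (\<lambda>s t. complex_of_real y * (\<tau>1 s t + \<tau>2 s t))"
    using x1(1) x2(1) by (simp add: field_simps)
  have "(\<lambda>s t. complex_of_real y * (\<tau>1 s t + \<tau>2 s t)) \<in> S"
    using cl1'[OF x1(2) x2(2), of "y/x1" "y/x2"] x1 x2 y unfolding e by auto
  thus ?thesis using p y unfolding G_def by auto
qed

lemma Gdown:
  assumes "G (\<lambda>s t. \<tau>1 s t + \<tau>2 s t)" "positive_op V \<tau>1" "positive_op V \<tau>2"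
  shows "G \<tau>1"
proof -
  obtain x where x: "x > 0" "(\<lambda>s t. complex_of_real x * (\<tau>1 s t + \<tau>2 s t)) \<in> S" using assms unfolding G_def by auto
  have p: "positive_op V (\<lambda>s t. \<tau>1 s t + \<tau>2 s t)" using assms by (auto intro: pos_add)
  then obtain y where y: "y > 0" "(\<lambda>s t. complex_of_real y * (\<tau>1 s t + \<tau>2 s t)) \<in> pdo V" by (rule scale_pdo)
  have t1: "Re (trace_H V \<tau>1) \<ge> 0" "Re (trace_H V \<tau>2) \<ge> 0" using trace_pos[OF fin] assms by auto
  have trs: "trace_H V (\<lambda>s t. complex_of_real y * (\<tau>1 s t + \<tau>2 s t)) = complex_of_real y * trace_H V (\<lambda>s t. \<tau>1 s t + \<tau>2 s t)"
    by (simp add: trace_H_def sum_distrib_left)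
  have trl: "y * Re (trace_H V (\<lambda>s t. \<tau>1 s t + \<tau>2 s t)) \<le> 1" using y(2) trs unfolding pdo_def
    by simp
  have tt: "Re (trace_H V (\<lambda>s t. \<tau>1 s t + \<tau>2 s t)) = Re (trace_H V \<tau>1) + Re (trace_H V \<tau>2)"
    by (simp add: trace_H_def sum.distrib)
  have b1: "y * Re (trace_H V \<tau>1) \<ge> 0" "y * Re (trace_H V \<tau>2) \<ge> 0" using y t1 by auto
  have b2: "y * Re (trace_H V \<tau>1) + y * Re (trace_H V \<tau>2) \<le> 1" using trl tt by (simp add: algebra_simps)
  have q1: "(\<lambda>s t. complex_of_real y * \<tau>1 s t) \<in> pdo V"
    by (rule pdo_scal[OF fin assms(2)]) (use y b1 b2 in auto)
  have q2: "(\<lambda>s t. complex_of_real y * \<tau>2 s t) \<in> pdo V"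
    by (rule pdo_scal[OF fin assms(3)]) (use y b1 b2 in auto)
  have e: "(\<lambda>s t. complex_of_real (x/y) * (complex_of_real y * \<tau>1 s t) + complex_of_real (x/y) * (complex_of_real y * \<tau>2 s t))
      = (\<lambda>s t. complex_of_real x * (\<tau>1 s t + \<tau>2 s t))"
    using y(1) by (simp add: field_simps)
  have "(\<lambda>s t. complex_of_real y * \<tau>1 s t) \<in> S"
    using cl2'[OF q1 q2, of "x/y" "x/y"] x y unfolding e by auto
  thus ?thesis using assms y unfolding G_def by auto
qed


lemma G_rk_range:
  assumes g: "G \<tau>" and kw: "is_ket V w"
  shows "G (rk (op_apply V \<tau> w))"
proof -
  have p: "positive_op V \<tau>" using g by (simp add: G_def)
  define u where "u = op_apply V \<tau> w"
  define A where "A = Re (Bf V \<tau> w w)"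
  have ku: "is_ket V u" unfolding u_def using p by (intro op_ket pos_op)
  have A0: "A \<ge> 0" using pos_real(2)[OF p kw] by (simp add: A_def)
  show ?thesis
  proof (cases "A = 0")
    case True
    have "(cmod (Bf V \<tau> w u))^2 \<le> 0" using cs[OF p ku kw] True by (simp add: A_def)
    hence "Bf V \<tau> w u = 0" by simp
    hence "inner_H V u u = 0" using inner_range[OF p kw ku] by (simp add: u_def)
    hence "u = (\<lambda>_. 0)" using inner_self_zero[OF fin ku] by simp
    thus ?thesis using G0 by (simp add: u_def[symmetric] rk_zero)
  next
    case False
    hence Ap: "A > 0" using A0 by simp
    define \<tau>' where "\<tau>' = (\<lambda>s t. \<tau> s t + complex_of_real (-1 / A) * rk u s t)"
    have p': "positive_op V \<tau>'" using split_pos[OF p kw] Ap by (simp add: \<tau>'_def A_def u_def)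
    have e: "\<tau> = (\<lambda>s t. complex_of_real (1/A) * rk u s t + \<tau>' s t)"
      by (simp add: \<tau>'_def)
    have "G (\<lambda>s t. complex_of_real (1/A) * rk u s t)"
      using Gdown[of "\<lambda>s t. complex_of_real (1/A) * rk u s t" \<tau>'] g e p' pos_scal[OF rk_pos[OF ku], of "1/A"] Ap
      by simp
    from Gscale[OF this Ap] have "G (\<lambda>s t. complex_of_real A * (complex_of_real (1 / A) * rk u s t))" .
    moreover have "(\<lambda>s t. complex_of_real A * (complex_of_real (1 / A) * rk u s t)) = rk u"
      using Ap by (simp add: field_simps)
    ultimately show ?thesis by (simp add: u_def)
  qed
qed

definition W :: "'q ket set" where "W = {u. is_ket V u \<and> G (rk u)}"

lemma W_zero: "(\<lambda>_. 0) \<in> W"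
  by (simp add: W_def rk_zero G0 is_ket_def)

lemma W_add: assumes "u \<in> W" "v \<in> W" shows "(\<lambda>s. u s + v s) \<in> W"
proof -
  have ku: "is_ket V u" "is_ket V v" "G (rk u)" "G (rk v)" using assms by (auto simp: W_def)
  have k1: "is_ket V (\<lambda>s. u s + v s)" "is_ket V (\<lambda>s. u s + (-1) * v s)" using ku by (auto simp: is_ket_def)
  have "G (\<lambda>s t. complex_of_real 2 * rk u s t + complex_of_real 2 * rk v s t)"
    using Gadd[OF Gscale[OF ku(3), of 2] Gscale[OF ku(4), of 2]] by simp
  moreover have "(\<lambda>s t. complex_of_real 2 * rk u s t + complex_of_real 2 * rk v s t)
     = (\<lambda>s t. rk (\<lambda>s. u s + v s) s t + rk (\<lambda>s. u s + (-1) * v s) s t)"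
    by (simp add: rk_def algebra_simps)
  ultimately have "G (rk (\<lambda>s. u s + v s))" using Gdown rk_pos k1 by metis
  thus ?thesis using k1 by (simp add: W_def)
qed

lemma W_scal: assumes "v \<in> W" shows "(\<lambda>s. c * v s) \<in> W"
proof (cases "c = 0")
  case True thus ?thesis using W_zero by simp
next
  case False
  have kv: "is_ket V v" "G (rk v)" using assms by (auto simp: W_def)
  have "rk (\<lambda>s. c * v s) = (\<lambda>s t. complex_of_real ((cmod c)^2) * rk v s t)"
    by (simp add: rk_def complex_norm_square del: of_real_power) (simp add: algebra_simps)
  moreover have "G (\<lambda>s t. complex_of_real ((cmod c)^2) * rk v s t)" using Gscale[OF kv(2), of "(cmod c)^2"] False by (simp del: of_real_power)
  ultimately show ?thesis using kv by (simp add: W_def ket_scal)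
qed

lemma W_sub: "subspace_H V W"
  unfolding subspace_H_def using W_zero W_add W_scal by (auto simp: W_def)


lemma G_supp:
  assumes "positive_op V \<rho>" "supp V \<rho> \<subseteq> W" shows "G \<rho>"
proof -
  define Z where "Z = (\<lambda>\<rho>::'q op. {s \<in> Pow V. \<rho> s s \<noteq> 0})"
  have "\<forall>\<rho>. card (Z \<rho>) = n \<longrightarrow> positive_op V \<rho> \<longrightarrow> supp V \<rho> \<subseteq> W \<longrightarrow> G \<rho>" for n
  proof (induction n rule: less_induct)
    case (less n)
    show ?case
    proof (intro allI impI)
      fix \<rho> assume c: "card (Z \<rho>) = n" and p: "positive_op V \<rho>" and sW: "supp V \<rho> \<subseteq> W"
      show "G \<rho>"
      proof (cases "Z \<rho> = {}")
        case True
        have "\<rho> = (\<lambda>s t. 0)"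
        proof (intro ext)
          fix s t
          show "\<rho> s t = 0"
          proof (cases "s \<in> Pow V \<and> t \<in> Pow V")
            case True
            hence "\<rho> s s = 0" "\<rho> t t = 0" using \<open>Z \<rho> = {}\<close> by (auto simp: Z_def)
            hence "(cmod (\<rho> s t))^2 \<le> 0" using mat_cs[OF fin p, of s t] True by simp
            thus ?thesis by simp
          next
            case False thus ?thesis using pos_op[OF p] by (auto simp: is_op_def)
          qed
        qed
        thus ?thesis using G0 by simp
      next
        case False
        then obtain s where sZ: "s \<in> Z \<rho>" by auto
        hence sP: "s \<in> Pow V" and nz: "\<rho> s s \<noteq> 0" by (auto simp: Z_def)
        define a where "a = Re (\<rho> s s)"
        have ima: "Im (\<rho> s s) = 0" "a \<ge> 0" using diag_pos[OF fin p sP] by (auto simp: a_def)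
        have rs: "\<rho> s s = complex_of_real a" using ima by (simp add: a_def complex_eq_iff)
        have ap: "a > 0" using ima nz rs by (cases "a = 0") auto
        have kw: "is_ket V (ev s)" by (rule ket_ev[OF sP])
        have Bw: "Re (Bf V \<rho> (ev s) (ev s)) = a" using Bf_ev[OF fin sP sP] by (simp add: a_def)
        define u where "u = op_apply V \<rho> (ev s)"
        have u: "u = (\<lambda>r. \<rho> r s)" using op_ev[OF fin sP] by (simp add: u_def)
        define \<rho>' where "\<rho>' = (\<lambda>r t. \<rho> r t + complex_of_real (-1 / a) * rk u r t)"
        have p': "positive_op V \<rho>'" using split_pos[OF p kw] Bw ap by (simp add: \<rho>'_def u_def)
        have uW: "u \<in> W" using sW kw by (auto simp: supp_def u_def)
        have sW': "supp V \<rho>' \<subseteq> W"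
        proof
          fix x assume "x \<in> supp V \<rho>'"
          then obtain v where kv: "is_ket V v" and x: "x = op_apply V \<rho>' v" by (auto simp: supp_def)
          have "x = (\<lambda>r. op_apply V \<rho> v r + (complex_of_real (-1/a) * inner_H V u v) * u r)"
            unfolding x \<rho>'_def op_add_A op_scal_A rk_apply by (simp add: mult.assoc)
          moreover have "op_apply V \<rho> v \<in> W" using sW kv by (auto simp: supp_def)
          moreover have "(\<lambda>r. (complex_of_real (-1/a) * inner_H V u v) * u r) \<in> W" using W_scal uW by blast
          ultimately show "x \<in> W" using W_add by (simp only:)
        qed
        have sub: "Z \<rho>' \<subseteq> Z \<rho> - {s}"
        proof
          fix r assume r: "r \<in> Z \<rho>'"
          hence rP: "r \<in> Pow V" by (simp add: Z_def)
          have \<rho>'rr: "\<rho>' r r = \<rho> r r - \<rho> r s * cnj (\<rho> r s) / complex_of_real a"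
            by (simp add: \<rho>'_def rk_def u)
          have "\<rho> r r \<noteq> 0"
          proof
            assume 0: "\<rho> r r = 0"
            hence "(cmod (\<rho> r s))^2 \<le> 0" using mat_cs[OF fin p rP sP] by simp
            hence "\<rho> r s = 0" by simp
            thus False using r 0 \<rho>'rr by (simp add: Z_def)
          qed
          moreover have "r \<noteq> s"
          proof
            assume "r = s"
            hence "\<rho>' r r = 0" using \<rho>'rr rs ap by simp
            thus False using r by (simp add: Z_def)
          qed
          ultimately show "r \<in> Z \<rho> - {s}" using rP by (simp add: Z_def)
        qed
        have finZ: "finite (Z \<rho>)" using fin by (simp add: Z_def)
        have "card (Z \<rho>') \<le> card (Z \<rho> - {s})" using sub finZ by (intro card_mono) auto
        also have "\<dots> < card (Z \<rho>)" using finZ sZ by (rule card_Diff1_less)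
        finally have "card (Z \<rho>') < n" using c by simp
        hence G\<rho>': "G \<rho>'" using less.IH p' sW' by blast
        have Gu: "G (rk u)" using uW by (simp add: W_def)
        have "G (\<lambda>r t. \<rho>' r t + complex_of_real (1/a) * rk u r t)"
          using Gadd[OF G\<rho>' Gscale[OF Gu, of "1/a"]] ap by simp
        moreover have "(\<lambda>r t. \<rho>' r t + complex_of_real (1/a) * rk u r t) = \<rho>" by (simp add: \<rho>'_def)
        ultimately show ?thesis by simp
      qed
    qed
  qed
  thus ?thesis using assms by blast
qed

lemma closure_S:
  assumes "\<rho> \<in> pdo V" "supp V \<rho> \<subseteq> span_H V (\<Union>\<sigma>\<in>S. supp V \<sigma>)"
  shows "\<rho> \<in> S"
proof -
  have "(\<Union>\<sigma>\<in>S. supp V \<sigma>) \<subseteq> W"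
  proof
    fix x assume "x \<in> (\<Union>\<sigma>\<in>S. supp V \<sigma>)"
    then obtain \<sigma> w where "\<sigma> \<in> S" "is_ket V w" "x = op_apply V \<sigma> w" by (auto simp: supp_def)
    moreover have "G \<sigma>" using GS \<open>\<sigma> \<in> S\<close> by simp
    ultimately show "x \<in> W" using G_rk_range op_ket[OF pos_op] unfolding W_def by (auto simp: G_def)
  qed
  hence "span_H V (\<Union>\<sigma>\<in>S. supp V \<sigma>) \<subseteq> W" unfolding span_H_def using W_sub by blast
  hence "G \<rho>" using G_supp assms by (auto simp: pdo_def)
  thus ?thesis using SG assms by simp
qed

end


lemma span_upper: "X \<subseteq> span_H V X"
  unfolding span_H_def by blast

lemma span_mono: "X \<subseteq> Y \<Longrightarrow> span_H V X \<subseteq> span_H V Y"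
  unfolding span_H_def by blast

lemma span_least: "subspace_H V T \<Longrightarrow> X \<subseteq> T \<Longrightarrow> span_H V X \<subseteq> T"
  unfolding span_H_def by blast

lemma kets_sub: "subspace_H V {v. is_ket V v}"
  unfolding subspace_H_def by (auto simp: is_ket_def)

lemma span_sub: assumes "X \<subseteq> {v. is_ket V v}" shows "subspace_H V (span_H V X)"
proof -
  have "span_H V X \<subseteq> {v. is_ket V v}" using span_least[OF kets_sub assms] .
  moreover have "(\<lambda>_. 0) \<in> span_H V X" unfolding span_H_def subspace_H_def by blast
  moreover have "(\<lambda>s. u s + v s) \<in> span_H V X" if "u \<in> span_H V X" "v \<in> span_H V X" for u v
    using that unfolding span_H_def subspace_H_def by blast
  moreover have "(\<lambda>s. c * v s) \<in> span_H V X" if "v \<in> span_H V X" for c v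
    using that unfolding span_H_def subspace_H_def by blast
  ultimately show ?thesis unfolding subspace_H_def by blast
qed

lemma supp_kets: "positive_op V \<rho> \<Longrightarrow> supp V \<rho> \<subseteq> {v. is_ket V v}"
  by (auto simp: supp_def intro: op_ket pos_op)

lemma alpha_s_sub: "R \<subseteq> pdo V \<Longrightarrow> subspace_H V (alpha_s V R)"
  unfolding alpha_s_def by (rule span_sub) (use supp_kets in \<open>auto simp: pdo_def\<close>)

lemma R_sub: "R \<subseteq> pdo V \<Longrightarrow> R \<subseteq> gamma_s V (alpha_s V R)"
  unfolding gamma_s_def alpha_s_def using span_upper by blast

lemma gamma_s_mono: "P \<subseteq> Q \<Longrightarrow> gamma_s V P \<subseteq> gamma_s V Q"
  unfolding gamma_s_def by auto

lemma alpha_s_mono: "R \<subseteq> R' \<Longrightarrow> alpha_s V R \<subseteq> alpha_s V R'"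
  unfolding alpha_s_def by (rule span_mono) auto

lemma P_sub:
  assumes fin: "finite V" and P: "subspace_H V P"
  shows "P \<subseteq> alpha_s V (gamma_s V P)"
proof
  fix v assume vP: "v \<in> P"
  have kv: "is_ket V v" using P vP by (auto simp: subspace_H_def)
  have Pscal: "(\<lambda>s. c * v s) \<in> P" for c using P vP unfolding subspace_H_def by blast
  show "v \<in> alpha_s V (gamma_s V P)"
  proof (cases "v = (\<lambda>_. 0)")
    case True
    have "subspace_H V (alpha_s V (gamma_s V P))" by (rule alpha_s_sub) (auto simp: gamma_s_def)
    thus ?thesis using True by (simp add: subspace_H_def)
  next
    case False
    define n where "n = (\<Sum>s\<in>Pow V. (cmod (v s))^2)"
    have iv: "inner_H V v v = complex_of_real n"
      unfolding inner_H_def n_def of_real_sum by (rule sum.cong) (simp_all only: cnj_self)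
    have n0: "n \<ge> 0" unfolding n_def by (rule sum_nonneg) simp
    have "n \<noteq> 0" using inner_self_zero[OF fin kv] False iv by auto
    hence np: "n > 0" using n0 by simp
    define y where "y = 1 / (1 + n)"
    have yp: "y > 0" using np by (simp add: y_def)
    define \<rho> where "\<rho> = (\<lambda>s t. complex_of_real y * rk v s t)"
    have "trace_H V (rk v) = inner_H V v v"
      unfolding trace_H_def rk_def inner_H_def by (rule sum.cong) (simp_all only: mult.commute)
    hence tr: "Re (trace_H V (rk v)) = n" using iv by simp
    have \<rho>pdo: "\<rho> \<in> pdo V" unfolding \<rho>_def
      by (rule pdo_scal[OF fin rk_pos[OF kv]]) (use yp np tr in \<open>auto simp: y_def field_simps\<close>)
    have app: "op_apply V \<rho> w = (\<lambda>s. (complex_of_real y * inner_H V v w) * v s)" for w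
      by (simp add: \<rho>_def op_scal_A rk_apply mult.assoc)
    have "supp V \<rho> \<subseteq> P"
    proof
      fix x assume "x \<in> supp V \<rho>"
      then obtain w where "x = op_apply V \<rho> w" by (auto simp: supp_def)
      thus "x \<in> P" using Pscal by (simp add: app)
    qed
    hence \<rho>g: "\<rho> \<in> gamma_s V P" using \<rho>pdo by (simp add: gamma_s_def)
    define w where "w = (\<lambda>s. complex_of_real (1 / (y * n)) * v s)"
    have kw: "is_ket V w" unfolding w_def by (rule ket_scal[OF kv])
    have "op_apply V \<rho> w = (\<lambda>s. (complex_of_real y * (complex_of_real (1 / (y * n)) * complex_of_real n)) * v s)"
      unfolding app w_def inner_scal2 iv by (rule refl)
    also have "complex_of_real y * (complex_of_real (1 / (y * n)) * complex_of_real n) = 1"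
      using yp np by (simp add: field_simps)
    finally have "op_apply V \<rho> w = v" by simp
    hence "v \<in> supp V \<rho>" using kw unfolding supp_def by blast
    hence "v \<in> (\<Union>\<sigma>\<in>gamma_s V P. supp V \<sigma>)" using \<rho>g by blast
    thus ?thesis using span_upper unfolding alpha_s_def by blast
  qed
qed

theorem mainTheorem3:
  fixes V :: "'q set"
    and \<alpha> :: "'q op set \<Rightarrow> 'a::complete_lattice"
    and \<gamma> :: "'a \<Rightarrow> 'q op set"
  assumes "finite V"
    and "well_structured V \<alpha> \<gamma>"
  shows "\<exists>(\<alpha>' :: 'q ket set \<Rightarrow> 'a) (\<gamma>' :: 'a \<Rightarrow> 'q ket set).
           galois_embedding_on (subspaces V) \<alpha>' \<gamma>' \<and>
           (\<forall>R. R \<subseteq> pdo V \<longrightarrow> \<alpha> R = \<alpha>' (alpha_s V R)) \<and>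
           (\<forall>a. \<gamma> a = gamma_s V (\<gamma>' a))"
proof -
  note fin = assms(1)
  have ge: "galois_embedding_on (Pow (pdo V)) \<alpha> \<gamma>" and
    b: "\<And>(I::nat set) \<rho> x. finite I \<Longrightarrow> (\<forall>i\<in>I. \<rho> i \<in> pdo V \<and> x i > (0::real)) \<Longrightarrow>
        (\<lambda>s t. \<Sum>i\<in>I. complex_of_real (x i) * \<rho> i s t) \<in> pdo V \<Longrightarrow>
        \<alpha> {(\<lambda>s t. \<Sum>i\<in>I. complex_of_real (x i) * \<rho> i s t)} = (SUP i\<in>I. \<alpha> {\<rho> i})"
    using assms(2) unfolding well_structured_def by auto
  have amono: "mono_on (Pow (pdo V)) \<alpha>" and gmono: "mono \<gamma>" and gpdo: "\<And>a. \<gamma> a \<subseteq> pdo V"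
    and gal: "\<And>c a. c \<subseteq> pdo V \<Longrightarrow> c \<subseteq> \<gamma> a \<longleftrightarrow> \<alpha> c \<le> a" and emb: "\<And>a. \<alpha> (\<gamma> a) = a"
    using ge unfolding galois_embedding_on_def by auto
  have mem: "\<rho> \<in> \<gamma> a \<longleftrightarrow> \<rho> \<in> pdo V \<and> \<alpha> {\<rho>} \<le> a" for \<rho> a
    using gal[of "{\<rho>}" a] gpdo[of a] by auto
  have zpdo: "(\<lambda>s t. 0) \<in> pdo V" using pos_zero by (simp add: pdo_def trace_H_def)
  have KL: "\<gamma> a = gamma_s V (alpha_s V (\<gamma> a))" for a
  proof -
    interpret cls V "\<gamma> a"
    proof
      show "finite V" by (rule fin)
      show "\<gamma> a \<subseteq> pdo V" by (rule gpdo)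
      show "(\<lambda>s t. 0) \<in> \<gamma> a"
        using b[of "{}" "\<lambda>_. \<lambda>s t. 0" "\<lambda>_. 1"] zpdo by (simp add: mem)
    next
      fix I :: "nat set" and \<rho> x
      assume f: "finite I" and h: "\<forall>i\<in>I. \<rho> i \<in> \<gamma> a \<and> 0 < x i"
        and sp: "(\<lambda>s t. \<Sum>i\<in>I. complex_of_real (x i) * \<rho> i s t) \<in> pdo V"
      have "\<alpha> {(\<lambda>s t. \<Sum>i\<in>I. complex_of_real (x i) * \<rho> i s t)} = (SUP i\<in>I. \<alpha> {\<rho> i})"
        using b[OF f _ sp] h mem by auto
      also have "\<dots> \<le> a" using h mem by (auto intro: SUP_least)
      finally show "(\<lambda>s t. \<Sum>i\<in>I. complex_of_real (x i) * \<rho> i s t) \<in> \<gamma> a" using sp mem by auto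
    next
      fix I :: "nat set" and \<rho> x j
      assume f: "finite I" and h: "\<forall>i\<in>I. \<rho> i \<in> pdo V \<and> 0 < x i"
        and sp: "(\<lambda>s t. \<Sum>i\<in>I. complex_of_real (x i) * \<rho> i s t) \<in> \<gamma> a" and j: "j \<in> I"
      have sp': "(\<lambda>s t. \<Sum>i\<in>I. complex_of_real (x i) * \<rho> i s t) \<in> pdo V" using sp gpdo by blast
      have "\<alpha> {\<rho> j} \<le> (SUP i\<in>I. \<alpha> {\<rho> i})" using j by (rule SUP_upper)
      also have "\<dots> = \<alpha> {(\<lambda>s t. \<Sum>i\<in>I. complex_of_real (x i) * \<rho> i s t)}" using b[OF f h sp'] by simp
      also have "\<dots> \<le> a" using sp mem by auto
      finally show "\<rho> j \<in> \<gamma> a" using h j mem by auto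
    qed
    show ?thesis
    proof
      show "\<gamma> a \<subseteq> gamma_s V (alpha_s V (\<gamma> a))" by (rule R_sub[OF gpdo])
      show "gamma_s V (alpha_s V (\<gamma> a)) \<subseteq> \<gamma> a"
        using closure_S by (auto simp: gamma_s_def alpha_s_def)
    qed
  qed
  define \<alpha>' where "\<alpha>' = (\<lambda>P. \<alpha> (gamma_s V P))"
  define \<gamma>' where "\<gamma>' = (\<lambda>a. alpha_s V (\<gamma> a))"
  have gsp: "gamma_s V P \<subseteq> pdo V" for P by (auto simp: gamma_s_def)
  have "galois_embedding_on (subspaces V) \<alpha>' \<gamma>'"
    unfolding galois_embedding_on_def
  proof (intro conjI allI ballI)
    show "mono_on (subspaces V) \<alpha>'"
      unfolding \<alpha>'_def
    proof (rule mono_onI)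
      fix r s :: "'q ket set" assume "r \<subseteq> s"
      thus "\<alpha> (gamma_s V r) \<le> \<alpha> (gamma_s V s)"
        by (intro mono_onD[OF amono]) (auto simp: gamma_s_def)
    qed
    show "mono \<gamma>'" unfolding \<gamma>'_def
    proof (rule monoI)
      fix a b :: 'a assume "a \<le> b"
      hence "\<gamma> a \<subseteq> \<gamma> b" using gmono by (auto dest: monoD)
      thus "alpha_s V (\<gamma> a) \<le> alpha_s V (\<gamma> b)" by (rule alpha_s_mono)
    qed
    fix a
    show "\<gamma>' a \<in> subspaces V" unfolding \<gamma>'_def subspaces_def using alpha_s_sub gpdo by auto
    show "\<alpha>' (\<gamma>' a) = a" unfolding \<alpha>'_def \<gamma>'_def by (subst KL[of a, symmetric]) (rule emb)
  next
    fix P a assume P: "P \<in> subspaces V"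
    show "P \<subseteq> \<gamma>' a \<longleftrightarrow> \<alpha>' P \<le> a"
    proof
      assume "P \<subseteq> \<gamma>' a"
      hence "gamma_s V P \<subseteq> gamma_s V (alpha_s V (\<gamma> a))" unfolding \<gamma>'_def by (rule gamma_s_mono)
      hence "gamma_s V P \<subseteq> \<gamma> a" by (subst KL[of a])
      thus "\<alpha>' P \<le> a" unfolding \<alpha>'_def using gal gsp by blast
    next
      assume "\<alpha>' P \<le> a"
      hence "gamma_s V P \<subseteq> \<gamma> a" unfolding \<alpha>'_def using gal gsp by blast
      hence "alpha_s V (gamma_s V P) \<subseteq> \<gamma>' a" unfolding \<gamma>'_def by (rule alpha_s_mono)
      thus "P \<subseteq> \<gamma>' a" using P_sub[OF fin] P by (auto simp: subspaces_def)
    qed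
  qed
  moreover have "\<forall>R. R \<subseteq> pdo V \<longrightarrow> \<alpha> R = \<alpha>' (alpha_s V R)"
  proof (intro allI impI)
    fix R assume R: "R \<subseteq> pdo V"
    have "\<alpha> R \<le> \<alpha> (gamma_s V (alpha_s V R))"
      using mono_onD[OF amono, of R "gamma_s V (alpha_s V R)"] R gsp R_sub[OF R] by auto
    moreover have "\<alpha> (gamma_s V (alpha_s V R)) \<le> \<alpha> R"
    proof -
      have "R \<subseteq> \<gamma> (\<alpha> R)" using gal R by blast
      hence "alpha_s V R \<subseteq> alpha_s V (\<gamma> (\<alpha> R))" by (rule alpha_s_mono)
      hence "gamma_s V (alpha_s V R) \<subseteq> gamma_s V (alpha_s V (\<gamma> (\<alpha> R)))" by (rule gamma_s_mono)
      hence "gamma_s V (alpha_s V R) \<subseteq> \<gamma> (\<alpha> R)" by (subst KL[of "\<alpha> R"])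
      thus ?thesis using gal gsp by blast
    qed
    ultimately show "\<alpha> R = \<alpha>' (alpha_s V R)" unfolding \<alpha>'_def by (rule antisym)
  qed
  moreover have "\<forall>a. \<gamma> a = gamma_s V (\<gamma>' a)"
  proof
    fix a show "\<gamma> a = gamma_s V (\<gamma>' a)" unfolding \<gamma>'_def by (rule KL)
  qed
  ultimately show ?thesis by blast
qed

end
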